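(* Let $k\ge1$, $1\le r\le 4k^2$, $\mathcal{B}=\mathcal{B}(2k,2k;r)$ and $G=D_4$. Then the number of equivalence classes of $\mathcal{B}$ under $G$ is \[|\mathcal{O}_G(\mathcal{B})|=\frac18\left(\binom{4k^2}{r}+2\binom{k^2}{\frac r4}+3\binom{2k^2}{\frac r2}+2\sum_{t=0}^{r}\binom{2k}{t}\binom{k(2k-1)}{\frac{r-t}{2}}\right).\]
   Context: $\mathcal{B}(2k,2k;r)$ is the set of all subsets of exactly $r$ cells ("boards" with $r$ blocked cells) of a $2k\times 2k$ grid. The dihedral group $D_4$ of the 8 symmetries of the square (four rotations about the center and reflections across the horizontal midline, vertical midline and both diagonals) acts on boards; $\mathcal{O}_G(\mathcal{B})$ is the set of orbits (equivalence classes). Convention: a binomial coefficient $\binom{a}{b}$ is $0$ when $b$ is not a nonnegative integer or $b>a$. *)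

theory Defs
  imports Complex_Main
begin

definition cells :: "nat \<Rightarrow> (nat \<times> nat) set" where
  "cells k = {0..<2*k} \<times> {0..<2*k}"

definition boards :: "nat \<Rightarrow> nat \<Rightarrow> (nat \<times> nat) set set" where
  "boards k r = {B. B \<subseteq> cells k \<and> card B = r}"

definition D4 :: "nat \<Rightarrow> ((nat \<times> nat) \<Rightarrow> (nat \<times> nat)) set" where
  "D4 k = (let m = 2*k - 1 in
     { (\<lambda>(i,j). (i, j)),
       (\<lambda>(i,j). (j, m - i)),
       (\<lambda>(i,j). (m - i, m - j)),
       (\<lambda>(i,j). (m - j, i)),
       (\<lambda>(i,j). (m - i, j)),
       (\<lambda>(i,j). (i, m - j)),
       (\<lambda>(i,j). (j, i)),
       (\<lambda>(i,j). (m - j, m - i)) })"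

definition orbit :: "nat \<Rightarrow> (nat \<times> nat) set \<Rightarrow> (nat \<times> nat) set set" where
  "orbit k B = {g ` B | g. g \<in> D4 k}"

definition orbits :: "nat \<Rightarrow> nat \<Rightarrow> (nat \<times> nat) set set set" where
  "orbits k r = orbit k ` boards k r"

definition gbin :: "nat \<Rightarrow> real \<Rightarrow> real" where
  "gbin a b = (if b \<in> \<int> \<and> b \<ge> 0 then real (a choose nat \<lfloor>b\<rfloor>) else 0)"

end

theory Submission
  imports Defs
begin


lemma burnside:
  fixes act :: "'g::finite \<Rightarrow> 'x \<Rightarrow> 'x" and X :: "'x set"
    and mul :: "'g \<Rightarrow> 'g \<Rightarrow> 'g" and inv :: "'g \<Rightarrow> 'g" and e :: 'g
  assumes finX: "finite X"
    and actX: "\<And>g x. x \<in> X \<Longrightarrow> act g x \<in> X"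
    and actmul: "\<And>g h x. act (mul g h) x = act g (act h x)"
    and acte: "\<And>x. act e x = x"
    and invl: "\<And>g. mul (inv g) g = e"
    and c1: "\<And>g s. mul g (mul (inv g) s) = s"
    and c2: "\<And>g s. mul (inv g) (mul g s) = s"
  shows "card ((\<lambda>x. range (\<lambda>g. act g x)) ` X) * card (UNIV::'g set)
         = (\<Sum>g\<in>UNIV. card {x\<in>X. act g x = x})"
proof -
  define orb where "orb x = range (\<lambda>g. act g x)" for x
  define stab where "stab x = {g. act g x = x}" for x
  have orbsub: "orb x \<subseteq> X" if "x \<in> X" for x using actX that unfolding orb_def by auto
  have orbfin: "finite (orb x)" for x unfolding orb_def by simp
  have orbeq: "orb y = orb x" if yx: "y \<in> orb x" for x y
  proof -
    obtain h where y: "y = act h x" using yx unfolding orb_def by auto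
    have "orb y \<subseteq> orb x" unfolding orb_def y by (auto simp: actmul[symmetric])
    moreover have "act g x = act (mul g (inv h)) y" for g
      by (simp add: y actmul invl acte flip: actmul[of "inv h" h])
    then have "orb x \<subseteq> orb y" unfolding orb_def by auto
    ultimately show ?thesis by blast
  qed
  have self: "x \<in> orb x" for x unfolding orb_def using acte by (metis rangeI)
  have os: "card (orb x) * card (stab x) = card (UNIV::'g set)" for x
  proof -
    have fib: "card {g. act g x = y} = card (stab x)" if yx: "y \<in> orb x" for y
    proof -
      obtain h where y: "y = act h x" using yx unfolding orb_def by auto
      have "bij_betw (mul h) (stab x) {g. act g x = y}"
        by (rule bij_betw_byWitness[where f'="mul (inv h)"])
           (auto simp: stab_def y c1 c2 actmul invl acte simp flip: actmul[of "inv h" h])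
      then show ?thesis by (simp add: bij_betw_same_card)
    qed
    have "card (UNIV::'g set) = (\<Sum>g\<in>(UNIV::'g set). 1::nat)" by simp
    also have "\<dots> = (\<Sum>y\<in>(\<lambda>g. act g x) ` UNIV. \<Sum>g\<in>{g\<in>UNIV. act g x = y}. 1::nat)"
      by (rule sum.image_gen) simp
    also have "\<dots> = (\<Sum>y\<in>(\<lambda>g. act g x) ` UNIV. card {g\<in>UNIV. act g x = y})" by simp
    also have "\<dots> = (\<Sum>y\<in>orb x. card (stab x))"
      unfolding orb_def by (intro sum.cong) (auto simp: fib[unfolded orb_def])
    finally show ?thesis by simp
  qed
  have pos: "card (orb x) > 0" for x using self orbfin by (metis card_gt_0_iff empty_iff)
  have "(\<Sum>g\<in>UNIV. card {x\<in>X. act g x = x}) = card (SIGMA g:UNIV. {x\<in>X. act g x = x})"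
    by (rule card_SigmaI[symmetric]) (auto simp: finX)
  also have "\<dots> = card (SIGMA x:X. stab x)"
    by (rule bij_betw_same_card[where f="\<lambda>(g,x). (x,g)"], rule bij_betw_byWitness[where f'="\<lambda>(x,g). (g,x)"]) (auto simp: stab_def)
  also have "\<dots> = (\<Sum>x\<in>X. card (stab x))"
    by (rule card_SigmaI) (auto simp: finX)
  finally have eq1: "(\<Sum>g\<in>UNIV. card {x\<in>X. act g x = x}) = (\<Sum>x\<in>X. card (stab x))" .
  have "real (\<Sum>x\<in>X. card (stab x)) = (\<Sum>x\<in>X. real (card (UNIV::'g set)) / card (orb x))"
    unfolding of_nat_sum
    proof (intro sum.cong refl)
      fix x have "real (card (orb x)) * real (card (stab x)) = real (card (UNIV::'g set))"
        using os[of x] by (metis of_nat_mult)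
      then show "real (card (stab x)) = real (card (UNIV::'g set)) / real (card (orb x))"
        using pos[of x] by (simp add: field_simps)
    qed
  also have "\<dots> = (\<Sum>Q\<in>orb ` X. \<Sum>x\<in>{x\<in>X. orb x = Q}. real (card (UNIV::'g set)) / card (orb x))"
    by (rule sum.image_gen[OF finX])
  also have "\<dots> = (\<Sum>Q\<in>orb ` X. real (card (UNIV::'g set)))"
  proof (intro sum.cong refl)
    fix Q assume "Q \<in> orb ` X"
    then obtain x0 where x0: "x0 \<in> X" "Q = orb x0" by auto
    have S: "{x\<in>X. orb x = Q} = Q"
      using x0 orbsub orbeq self by blast
    have "(\<Sum>x\<in>{x\<in>X. orb x = Q}. real (card (UNIV::'g set)) / card (orb x)) = (\<Sum>x\<in>Q. real (card (UNIV::'g set)) / card Q)"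
      unfolding S by (rule sum.cong) (use x0 orbeq in auto)
    also have "\<dots> = real (card (UNIV::'g set))" using pos[of x0] x0 by simp
    finally show "(\<Sum>x\<in>{x\<in>X. orb x = Q}. real (card (UNIV::'g set)) / card (orb x)) = real (card (UNIV::'g set))" .
  qed
  also have "\<dots> = real (card (orb ` X) * card (UNIV::'g set))" by simp
  finally have "real (\<Sum>x\<in>X. card (stab x)) = real (card (orb ` X) * card (UNIV::'g set))" .
  then have fin: "(\<Sum>x\<in>X. card (stab x)) = card (orb ` X) * card (UNIV::'g set)" by (simp only: of_nat_eq_iff)
  have oo: "(\<lambda>x. range (\<lambda>g. act g x)) = orb" by (simp add: orb_def fun_eq_iff)
  show ?thesis unfolding oo eq1 fin ..
qed



type_synonym g8 = "bool \<times> bool \<times> bool"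

fun base :: "nat \<Rightarrow> g8 \<Rightarrow> nat \<times> nat \<Rightarrow> nat \<times> nat" where
  "base k (s,p,q) (i,j) = (let a = (if s then j else i); b = (if s then i else j) in
     (if p then 2*k-1-a else a, if q then 2*k-1-b else b))"

definition actc :: "nat \<Rightarrow> g8 \<Rightarrow> nat \<times> nat \<Rightarrow> nat \<times> nat" where
  "actc k u x = (if x \<in> cells k then base k u x else x)"

fun gmul :: "g8 \<Rightarrow> g8 \<Rightarrow> g8" where
  "gmul (s1,p1,q1) (s2,p2,q2) = (s1 \<noteq> s2, p1 \<noteq> (if s1 then q2 else p2), q1 \<noteq> (if s1 then p2 else q2))"

fun ginv :: "g8 \<Rightarrow> g8" where
  "ginv (s,p,q) = (if s then (s,q,p) else (s,p,q))"

lemma gmul_inv: "gmul (ginv g) g = (False,False,False)"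
  by (cases g) auto
lemma gc1: "gmul g (gmul (ginv g) s) = s"
  by (cases g; cases s) auto
lemma gc2: "gmul (ginv g) (gmul g s) = s"
  by (cases g; cases s) auto

lemma base_cells: "x \<in> cells k \<Longrightarrow> base k u x \<in> cells k"
  by (cases x; cases u) (auto simp: cells_def Let_def)

lemma actc_cells: "x \<in> cells k \<Longrightarrow> actc k u x \<in> cells k"
  by (simp add: actc_def base_cells)

lemma actc_e: "actc k (False,False,False) x = x"
  by (cases x) (simp add: actc_def)

lemma actc_mul: "actc k (gmul u v) x = actc k u (actc k v x)"
proof (cases "x \<in> cells k")
  case True
  obtain i j where x: "x = (i,j)" by (cases x)
  obtain s1 p1 q1 where u: "u = (s1,p1,q1)" by (cases u)
  obtain s2 p2 q2 where v: "v = (s2,p2,q2)" by (cases v)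
  have ij: "i < 2*k" "j < 2*k" using True x by (auto simp: cells_def)
  show ?thesis using True base_cells[OF True, of v] ij
    unfolding actc_def x u v by (cases s1; cases p1; cases q1; cases s2; cases p2; cases q2) (auto simp: Let_def)
next
  case False
  then show ?thesis by (simp add: actc_def)
qed

lemma range_base: "range (base k) = D4 k"
proof -
  have U: "(UNIV::g8 set) = {(False,False,False),(True,False,True),(False,True,True),(True,True,False),
     (False,True,False),(False,False,True),(True,False,False),(True,True,True)}"
    by auto
  have "base k (False,False,False) = (\<lambda>(i,j). (i,j))"
    "base k (True,False,True) = (\<lambda>(i,j). (j, 2*k-1 - i))"
    "base k (False,True,True) = (\<lambda>(i,j). (2*k-1 - i, 2*k-1 - j))"
    "base k (True,True,False) = (\<lambda>(i,j). (2*k-1 - j, i))"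
    "base k (False,True,False) = (\<lambda>(i,j). (2*k-1 - i, j))"
    "base k (False,False,True) = (\<lambda>(i,j). (i, 2*k-1 - j))"
    "base k (True,False,False) = (\<lambda>(i,j). (j, i))"
    "base k (True,True,True) = (\<lambda>(i,j). (2*k-1 - j, 2*k-1 - i))"
    by (auto simp: fun_eq_iff)
  then show ?thesis unfolding U D4_def Let_def image_insert image_empty by simp
qed



lemma fixcount:
  fixes \<sigma> :: "'a \<Rightarrow> 'a" and C D F :: "'a set" and L :: nat
  assumes fin: "finite C" and L: "L \<ge> 1"
    and maps: "\<And>x. x \<in> C \<Longrightarrow> \<sigma> x \<in> C"
    and per: "\<And>x. x \<in> C \<Longrightarrow> (\<sigma>^^L) x = x"
    and DC: "D \<subseteq> C" and Dfix: "\<And>x. x \<in> D \<Longrightarrow> \<sigma> x = x"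
    and FC: "F \<subseteq> C" and FD: "F \<inter> D = {}"
    and cov: "\<And>x. x \<in> C \<Longrightarrow> x \<notin> D \<Longrightarrow> \<exists>n<L. (\<sigma>^^n) x \<in> F"
    and dis: "\<And>y n. y \<in> F \<Longrightarrow> 0 < n \<Longrightarrow> n < L \<Longrightarrow> (\<sigma>^^n) y \<notin> F"
  shows "card {B. B \<subseteq> C \<and> \<sigma> ` B = B \<and> card B = r}
           = (\<Sum>t=0..r. (card D choose t) * (if L dvd (r-t) then card F choose ((r-t) div L) else 0))"
    and "card C = card D + L * card F"
proof -
  have pC: "(\<sigma>^^n) x \<in> C" if "x \<in> C" for x n
    using that by (induction n) (auto simp: maps)
  have pD: "(\<sigma>^^n) x = x" if "x \<in> D" for x n
    using that by (induction n) (auto simp: Dfix)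
  have pLq: "(\<sigma>^^(L*q)) x = x" if "x \<in> C" for x q
  proof (induction q)
    case (Suc q)
    have "(\<sigma>^^(L*Suc q)) x = (\<sigma>^^L) ((\<sigma>^^(L*q)) x)"
      by (simp add: funpow_add)
    then show ?case using Suc per[OF that] by simp
  qed simp
  have pmod: "(\<sigma>^^n) x = (\<sigma>^^(n mod L)) x" if "x \<in> C" for x n
  proof -
    have "(\<sigma>^^n) x = (\<sigma>^^(n mod L)) ((\<sigma>^^(L*(n div L))) x)"
      by (metis funpow_add o_apply mod_mult_div_eq)
    then show ?thesis using pLq[OF that] by simp
  qed
  define h where "h = (\<lambda>(n,y). (\<sigma>^^n) y)"
  have uniq: "n = n' \<and> y = y'" if "y \<in> F" "y' \<in> F" "n < L" "n' < L" "(\<sigma>^^n) y = (\<sigma>^^n') y'" for y y' n n'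
  proof -
    have gen: "n = n' \<and> y = y'" if "y \<in> F" "y' \<in> F" "n < L" "n' < L" "(\<sigma>^^n) y = (\<sigma>^^n') y'" "n \<le> n'" for y y' n n'
    proof -
      have yC: "y \<in> C" "y' \<in> C" using that FC by auto
      have "y = (\<sigma>^^(L - n + n)) y" using per[OF yC(1)] that by simp
      also have "\<dots> = (\<sigma>^^(L-n)) ((\<sigma>^^n) y)" by (simp add: funpow_add)
      also have "\<dots> = (\<sigma>^^(L-n)) ((\<sigma>^^n') y')" using that by simp
      also have "\<dots> = (\<sigma>^^(L-n+n')) y'" by (simp add: funpow_add)
      also have "\<dots> = (\<sigma>^^((L-n+n') mod L)) y'" using pmod yC by blast
      also have "(L-n+n') mod L = n' - n"
      proof -
        have e: "L-n+n' = (n'-n) + L" using that by simp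
        have "n'-n < L" using that by simp
        then show ?thesis unfolding e by simp
      qed
      finally have yy: "y = (\<sigma>^^(n'-n)) y'" .
      show ?thesis
      proof (cases "n = n'")
        case True then show ?thesis using yy by simp
      next
        case False
        then have "0 < n'-n" "n'-n < L" using that by auto
        then show ?thesis using dis[OF \<open>y' \<in> F\<close>] yy \<open>y \<in> F\<close> by metis
      qed
    qed
    show ?thesis
    proof (cases "n \<le> n'")
      case True then show ?thesis using gen that by blast
    next
      case False then show ?thesis using gen[of y' y n' n] that by auto
    qed
  qed
  have notD: "(\<sigma>^^n) y \<notin> D" if "y \<in> F" "n < L" for y n
  proof
    assume a: "(\<sigma>^^n) y \<in> D"
    have yC: "y \<in> C" using that FC by auto
    have "y = (\<sigma>^^(L - n + n)) y" using per[OF yC] that by simp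
    also have "\<dots> = (\<sigma>^^(L-n)) ((\<sigma>^^n) y)" by (simp add: funpow_add)
    also have "\<dots> = (\<sigma>^^n) y" using pD[OF a] by simp
    finally show False using a that FD by auto
  qed
  have injh: "inj_on h ({..<L} \<times> F)"
    unfolding h_def inj_on_def using uniq by auto
  have hC: "h ` ({..<L} \<times> F) = C - D"
  proof
    show "h ` ({..<L} \<times> F) \<subseteq> C - D" unfolding h_def using pC FC notD by auto
  next
    show "C - D \<subseteq> h ` ({..<L} \<times> F)"
    proof
      fix x assume x: "x \<in> C - D"
      then obtain n where n: "n < L" "(\<sigma>^^n) x \<in> F" using cov by auto
      have "x = (\<sigma>^^(L - n + n)) x" using per x n by simp
      also have "\<dots> = (\<sigma>^^(L-n)) ((\<sigma>^^n) x)" by (simp add: funpow_add)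
      also have "\<dots> = (\<sigma>^^((L-n) mod L)) ((\<sigma>^^n) x)" using pmod pC x by blast
      finally have "x = h ((L-n) mod L, (\<sigma>^^n) x)" unfolding h_def by simp
      moreover have "((L-n) mod L, (\<sigma>^^n) x) \<in> {..<L} \<times> F" using n L by auto
      ultimately show "x \<in> h ` ({..<L} \<times> F)" by blast
    qed
  qed
  have finF: "finite F" using FC fin finite_subset by blast
  have finD: "finite D" using DC fin finite_subset by blast
  have cardsplit: "card (A1 \<union> h ` ({..<L} \<times> A2)) = card A1 + L * card A2"
    if "A1 \<subseteq> D" "A2 \<subseteq> F" for A1 A2
  proof -
    have "h ` ({..<L} \<times> A2) \<subseteq> C - D" using hC that by blast
    then have disj: "A1 \<inter> h ` ({..<L} \<times> A2) = {}" using that by blast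
    have "card (h ` ({..<L} \<times> A2)) = card ({..<L} \<times> A2)"
      by (rule card_image, rule inj_on_subset[OF injh]) (use that in auto)
    also have "\<dots> = L * card A2" by (simp add: card_cartesian_product)
    finally show ?thesis
      using disj that finD finF finite_subset
      by (subst card_Un_disjoint) (auto intro: finite_subset)
  qed
  show "card C = card D + L * card F"
  proof -
    have "C = D \<union> h ` ({..<L} \<times> F)" using hC DC by blast
    then show ?thesis using cardsplit[of D F] by simp
  qed
  define Inv where "Inv = {B. B \<subseteq> C \<and> \<sigma> ` B = B \<and> card B = r}"
  define P where "P = {(A1,A2). A1 \<subseteq> D \<and> A2 \<subseteq> F \<and> card A1 + L * card A2 = r}"
  have recon: "B = (B \<inter> D) \<union> h ` ({..<L} \<times> (B \<inter> F))" if "B \<subseteq> C" "\<sigma> ` B = B" for B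
  proof -
    have inB: "(\<sigma>^^n) x \<in> B" if "x \<in> B" for x n
      using that \<open>\<sigma> ` B = B\<close> by (induction n) auto
    show ?thesis
    proof
      show "B \<subseteq> (B \<inter> D) \<union> h ` ({..<L} \<times> (B \<inter> F))"
      proof
        fix x assume xB: "x \<in> B"
        show "x \<in> (B \<inter> D) \<union> h ` ({..<L} \<times> (B \<inter> F))"
        proof (cases "x \<in> D")
          case False
          then have "x \<in> h ` ({..<L} \<times> F)" using hC xB that by blast
          then obtain n y where ny: "n < L" "y \<in> F" "x = (\<sigma>^^n) y" unfolding h_def by auto
          have yC: "y \<in> C" using ny FC by auto
          have "y = (\<sigma>^^(L - n + n)) y" using per[OF yC] ny by simp
          also have "\<dots> = (\<sigma>^^(L-n)) x" by (simp add: funpow_add ny)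
          finally have "y \<in> B" using inB xB by simp
          then show ?thesis using ny unfolding h_def by auto
        qed (use xB in auto)
      qed
    next
      show "(B \<inter> D) \<union> h ` ({..<L} \<times> (B \<inter> F)) \<subseteq> B" unfolding h_def using inB by auto
    qed
  qed
  have inv_build: "\<sigma> ` (A1 \<union> h ` ({..<L} \<times> A2)) = A1 \<union> h ` ({..<L} \<times> A2)"
    if "A1 \<subseteq> D" "A2 \<subseteq> F" for A1 A2
  proof
    show "\<sigma> ` (A1 \<union> h ` ({..<L} \<times> A2)) \<subseteq> A1 \<union> h ` ({..<L} \<times> A2)"
    proof
      fix z assume "z \<in> \<sigma> ` (A1 \<union> h ` ({..<L} \<times> A2))"
      then obtain w where w: "w \<in> A1 \<union> h ` ({..<L} \<times> A2)" "z = \<sigma> w" by auto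
      show "z \<in> A1 \<union> h ` ({..<L} \<times> A2)"
      proof (cases "w \<in> A1")
        case True then show ?thesis using w Dfix that by auto
      next
        case False
        then obtain n y where ny: "n < L" "y \<in> A2" "w = (\<sigma>^^n) y" using w unfolding h_def by auto
        have yC: "y \<in> C" using ny that FC by auto
        have z: "z = (\<sigma>^^(Suc n)) y" using w ny by simp
        show ?thesis
        proof (cases "Suc n < L")
          case True
          have "z = h (Suc n, y)" unfolding h_def using z by simp
          moreover have "(Suc n, y) \<in> {..<L} \<times> A2" using ny True by auto
          ultimately show ?thesis by blast
        next
          case False
          then have "Suc n = L" using ny by simp
          then have "z = (\<sigma>^^0) y" using z per[OF yC] by simp
          then have "z = h (0, y)" unfolding h_def by simp
          moreover have "(0, y) \<in> {..<L} \<times> A2" using ny L by auto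
          ultimately show ?thesis by blast
        qed
      qed
    qed
  next
    show "A1 \<union> h ` ({..<L} \<times> A2) \<subseteq> \<sigma> ` (A1 \<union> h ` ({..<L} \<times> A2))"
    proof
      fix z assume z: "z \<in> A1 \<union> h ` ({..<L} \<times> A2)"
      show "z \<in> \<sigma> ` (A1 \<union> h ` ({..<L} \<times> A2))"
      proof (cases "z \<in> A1")
        case True then show ?thesis using Dfix that by (metis UnI1 image_eqI subsetD)
      next
        case False
        then obtain n y where ny: "n < L" "y \<in> A2" "z = (\<sigma>^^n) y" using z unfolding h_def by auto
        have yC: "y \<in> C" using ny that FC by auto
        define n' where "n' = (if n = 0 then L - 1 else n - 1)"
        have n': "n' < L" "z = \<sigma> ((\<sigma>^^n') y)"
        proof -
          show "n' < L" using ny L unfolding n'_def by auto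
          show "z = \<sigma> ((\<sigma>^^n') y)"
          proof (cases "n = 0")
            case True
            have "\<sigma> ((\<sigma>^^(L-1)) y) = (\<sigma>^^(Suc (L-1))) y" by simp
            also have "Suc (L-1) = L" using L by simp
            finally show ?thesis using True ny per[OF yC] n'_def by simp
          next
            case False
            have "\<sigma> ((\<sigma>^^(n-1)) y) = (\<sigma>^^(Suc (n-1))) y" by simp
            also have "Suc (n-1) = n" using False by simp
            finally show ?thesis using False ny n'_def by simp
          qed
        qed
        have "(\<sigma>^^n') y = h (n', y)" unfolding h_def by simp
        moreover have "(n', y) \<in> {..<L} \<times> A2" using n' ny by auto
        ultimately have "(\<sigma>^^n') y \<in> h ` ({..<L} \<times> A2)" by blast
        then show ?thesis using n' by blast
      qed
    qed
  qed
  have meetD: "(A1 \<union> h ` ({..<L} \<times> A2)) \<inter> D = A1" if "A1 \<subseteq> D" "A2 \<subseteq> F" for A1 A2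
    using that notD unfolding h_def by auto
  have meetF: "(A1 \<union> h ` ({..<L} \<times> A2)) \<inter> F = A2" if "A1 \<subseteq> D" "A2 \<subseteq> F" for A1 A2
  proof -
    have z: "n = 0" if "n < L" "y \<in> A2" "(\<sigma>^^n) y \<in> F" for n y
      using uniq[of y "(\<sigma>^^n) y" n 0] that \<open>A2 \<subseteq> F\<close> L by auto
    show ?thesis
    proof
      show "(A1 \<union> h ` ({..<L} \<times> A2)) \<inter> F \<subseteq> A2"
      proof
        fix x assume x: "x \<in> (A1 \<union> h ` ({..<L} \<times> A2)) \<inter> F"
        have "x \<notin> A1" using x that FD by blast
        then obtain n y where ny: "n < L" "y \<in> A2" "x = (\<sigma>^^n) y" using x unfolding h_def by auto
        then have "n = 0" using z x by blast
        then show "x \<in> A2" using ny by simp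
      qed
    next
      show "A2 \<subseteq> (A1 \<union> h ` ({..<L} \<times> A2)) \<inter> F"
      proof
        fix y assume y: "y \<in> A2"
        have "y = h (0, y)" unfolding h_def by simp
        moreover have "(0, y) \<in> {..<L} \<times> A2" using y L by auto
        ultimately show "y \<in> (A1 \<union> h ` ({..<L} \<times> A2)) \<inter> F" using y that by blast
      qed
    qed
  qed
  have bij: "bij_betw (\<lambda>B. (B \<inter> D, B \<inter> F)) Inv P"
  proof (rule bij_betw_byWitness[where f'="\<lambda>(A1,A2). A1 \<union> h ` ({..<L} \<times> A2)"])
    show "\<forall>B\<in>Inv. (\<lambda>(A1,A2). A1 \<union> h ` ({..<L} \<times> A2)) (B \<inter> D, B \<inter> F) = B"
      unfolding Inv_def using recon by auto
    show "\<forall>a'\<in>P. (\<lambda>B. (B \<inter> D, B \<inter> F)) ((\<lambda>(A1,A2). A1 \<union> h ` ({..<L} \<times> A2)) a') = a'"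
      unfolding P_def using meetD meetF by auto
    show "(\<lambda>B. (B \<inter> D, B \<inter> F)) ` Inv \<subseteq> P"
    proof
      fix z assume "z \<in> (\<lambda>B. (B \<inter> D, B \<inter> F)) ` Inv"
      then obtain B where B: "B \<in> Inv" "z = (B \<inter> D, B \<inter> F)" by auto
      have "card B = card (B \<inter> D) + L * card (B \<inter> F)"
        using recon[of B] B cardsplit[of "B \<inter> D" "B \<inter> F"] unfolding Inv_def by auto
      then show "z \<in> P" using B unfolding Inv_def P_def by auto
    qed
    show "(\<lambda>(A1,A2). A1 \<union> h ` ({..<L} \<times> A2)) ` P \<subseteq> Inv"
    proof
      fix z assume "z \<in> (\<lambda>(A1,A2). A1 \<union> h ` ({..<L} \<times> A2)) ` P"
      then obtain A1 A2 where A: "A1 \<subseteq> D" "A2 \<subseteq> F" "card A1 + L * card A2 = r"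
        "z = A1 \<union> h ` ({..<L} \<times> A2)" unfolding P_def by auto
      have "z \<subseteq> C" using A hC DC by auto
      then show "z \<in> Inv" unfolding Inv_def using A inv_build cardsplit by auto
    qed
  qed
  have "card Inv = card P" using bij by (rule bij_betw_same_card)
  also have "P = (\<Union>t\<in>{0..r}. {A1. A1 \<subseteq> D \<and> card A1 = t} \<times> {A2. A2 \<subseteq> F \<and> L * card A2 = r - t})"
    unfolding P_def by auto
  also have "card \<dots> = (\<Sum>t=0..r. card ({A1. A1 \<subseteq> D \<and> card A1 = t} \<times> {A2. A2 \<subseteq> F \<and> L * card A2 = r - t}))"
    by (rule card_UN_disjoint) (auto simp: finD finF)
  also have "\<dots> = (\<Sum>t=0..r. (card D choose t) * (if L dvd (r-t) then card F choose ((r-t) div L) else 0))"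
  proof (intro sum.cong refl)
    fix t
    have "{A2. A2 \<subseteq> F \<and> L * card A2 = r - t} = (if L dvd (r-t) then {A2. A2 \<subseteq> F \<and> card A2 = (r - t) div L} else {})"
      using L by (auto simp: dvd_def) (metis mult.commute)
    then show "card ({A1. A1 \<subseteq> D \<and> card A1 = t} \<times> {A2. A2 \<subseteq> F \<and> L * card A2 = r - t}) =
         (card D choose t) * (if L dvd (r-t) then card F choose ((r-t) div L) else 0)"
      by (simp add: card_cartesian_product n_subsets finD finF)
  qed
  finally show "card {B. B \<subseteq> C \<and> \<sigma> ` B = B \<and> card B = r}
           = (\<Sum>t=0..r. (card D choose t) * (if L dvd (r-t) then card F choose ((r-t) div L) else 0))"
    unfolding Inv_def .
qed



lemma fp2: "(f^^2) x = f (f x)" and fp3: "(f^^3) x = f (f (f x))" and fp4: "(f^^4) x = f (f (f (f x)))"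
  by (simp_all add: numeral_eq_Suc)

lemma ex2: "(\<exists>n::nat<2. P n) = (P 0 \<or> P 1)"
  by (auto simp: less_Suc_eq numeral_eq_Suc)
lemma ex4: "(\<exists>n::nat<4. P n) = (P 0 \<or> P 1 \<or> P 2 \<or> P 3)"
  by (auto simp: less_Suc_eq numeral_eq_Suc)
lemma ex1: "(\<exists>n::nat<1. P n) = P 0"
  by auto
lemma n4: "0 < n \<Longrightarrow> n < (4::nat) \<Longrightarrow> n = 1 \<or> n = 2 \<or> n = 3" by auto
lemma n2: "0 < n \<Longrightarrow> n < (2::nat) \<Longrightarrow> n = 1" by auto

lemma sum0: "(\<Sum>t=0..r. ((0::nat) choose t) * f t) = (f 0::nat)"
proof -
  have "(\<Sum>t\<in>{0..r}. ((0::nat) choose t) * f t) = (\<Sum>t\<in>{0}. ((0::nat) choose t) * f t)"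
    by (rule sum.mono_neutral_right) auto
  then show ?thesis by simp
qed

lemma actc_in: "i < 2*k \<Longrightarrow> j < 2*k \<Longrightarrow> actc k u (i,j) = base k u (i,j)"
  by (simp add: actc_def cells_def)

lemma card_cells: "card (cells k) = 4*k^2"
  by (simp add: cells_def card_cartesian_product power2_eq_square)

lemma fin_cells: "finite (cells k)" by (simp add: cells_def)

lemma inst_rot90:
  assumes k: "k \<ge> 1"
  shows "card {B. B \<subseteq> cells k \<and> actc k (True,False,True) ` B = B \<and> card B = r}
         = (if 4 dvd r then k^2 choose (r div 4) else 0)"
proof -
  let ?s = "actc k (True,False,True)"
  let ?F = "{0..<k} \<times> {0..<k}"
  have cov: "\<exists>n<4. (?s^^n) x \<in> ?F" if "x \<in> cells k" for x
    using that unfolding ex4 fp2 fp3 by (cases x) (auto simp: cells_def actc_in Let_def)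
  have dis: "(?s^^n) y \<notin> ?F" if "y \<in> ?F" "0 < n" "n < 4" for y n
    using n4[OF that(2,3)] that(1) by (cases y) (auto simp: fp2 fp3 cells_def actc_in Let_def)
  have per: "(?s^^4) x = x" if "x \<in> cells k" for x
    using that unfolding fp4 by (cases x) (auto simp: cells_def actc_in Let_def)
  have FC: "?F \<subseteq> cells k" by (auto simp: cells_def)
  note fc1 = fixcount(1)[where \<sigma>="?s" and C="cells k" and D="{}" and F="?F" and L=4 and r=r,
      OF fin_cells _ actc_cells per _ _ FC _ cov dis]
  note fc2 = fixcount(2)[where \<sigma>="?s" and C="cells k" and D="{}" and F="?F" and L=4,
      OF fin_cells _ actc_cells per _ _ FC _ cov dis]
  have "card (cells k) = 4 * card ?F" using fc2 by (auto simp: cells_def)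
  then have cF: "card ?F = k^2" using card_cells by simp
  have "card {B. B \<subseteq> cells k \<and> ?s ` B = B \<and> card B = r} = 
     (\<Sum>t=0..r. (0 choose t) * (if 4 dvd (r-t) then card ?F choose ((r-t) div 4) else 0))"
    using fc1 by (simp add: cells_def)
  also have "\<dots> = (if 4 dvd r then k^2 choose (r div 4) else 0)"
    by (simp only: sum0) (simp add: cF)
  finally show ?thesis .
qed



lemma inst_nodiag:
  fixes u :: g8 and F :: "(nat\<times>nat) set" and L :: nat
  assumes L: "L \<ge> 1" and FC: "F \<subseteq> cells k"
    and per: "\<And>x. x \<in> cells k \<Longrightarrow> (actc k u ^^ L) x = x"
    and cov: "\<And>x. x \<in> cells k \<Longrightarrow> \<exists>n<L. (actc k u ^^ n) x \<in> F"
    and dis: "\<And>y n. y \<in> F \<Longrightarrow> 0 < n \<Longrightarrow> n < L \<Longrightarrow> (actc k u ^^ n) y \<notin> F"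
  shows "card {B. B \<subseteq> cells k \<and> actc k u ` B = B \<and> card B = r}
         = (if L dvd r then (4*k^2 div L) choose (r div L) else 0)"
proof -
  note fc1 = fixcount(1)[where \<sigma>="actc k u" and C="cells k" and D="{}" and F="F" and L=L and r=r,
      OF fin_cells L actc_cells per _ _ FC _ cov dis]
  note fc2 = fixcount(2)[where \<sigma>="actc k u" and C="cells k" and D="{}" and F="F" and L=L,
      OF fin_cells L actc_cells per _ _ FC _ cov dis]
  have "4*k^2 = L * card F" using fc2 card_cells by simp
  then have cF: "card F = 4*k^2 div L" using L by simp
  have "card {B. B \<subseteq> cells k \<and> actc k u ` B = B \<and> card B = r} = 
     (\<Sum>t=0..r. (0 choose t) * (if L dvd (r-t) then card F choose ((r-t) div L) else 0))"
    using fc1 by simp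
  also have "\<dots> = (if L dvd r then (4*k^2 div L) choose (r div L) else 0)"
    by (simp only: sum0) (simp add: cF)
  finally show ?thesis .
qed

lemma inst_diag:
  fixes u :: g8 and F D :: "(nat\<times>nat) set"
  assumes FC: "F \<subseteq> cells k" and DC: "D \<subseteq> cells k" and FD: "F \<inter> D = {}"
    and Dfix: "\<And>x. x \<in> D \<Longrightarrow> actc k u x = x"
    and per: "\<And>x. x \<in> cells k \<Longrightarrow> (actc k u ^^ 2) x = x"
    and cov: "\<And>x. x \<in> cells k \<Longrightarrow> x \<notin> D \<Longrightarrow> \<exists>n<2. (actc k u ^^ n) x \<in> F"
    and dis: "\<And>y. y \<in> F \<Longrightarrow> actc k u y \<notin> F"
    and cD: "card D = 2*k"
  shows "card {B. B \<subseteq> cells k \<and> actc k u ` B = B \<and> card B = r}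
         = (\<Sum>t=0..r. (2*k choose t) * (if 2 dvd (r-t) then (k*(2*k-1)) choose ((r-t) div 2) else 0))"
proof -
  have dis': "(actc k u ^^ n) y \<notin> F" if "y \<in> F" "0 < n" "n < 2" for y n
    using n2[OF that(2,3)] dis[OF that(1)] by simp
  note fc1 = fixcount(1)[where \<sigma>="actc k u" and C="cells k" and D="D" and F="F" and L=2 and r=r,
      OF fin_cells _ actc_cells per DC Dfix FC FD cov dis', simplified]
  note fc2 = fixcount(2)[where \<sigma>="actc k u" and C="cells k" and D="D" and F="F" and L=2,
      OF fin_cells _ actc_cells per DC Dfix FC FD cov dis', simplified]
  have "4*k^2 = 2*k + 2 * card F" using fc2 card_cells cD by simp
  then have cF: "card F = k*(2*k-1)" by (simp add: power2_eq_square algebra_simps diff_mult_distrib2)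
  show ?thesis using fc1 unfolding cF cD by simp
qed

lemma cellsE: "x \<in> cells k \<Longrightarrow> (\<And>i j. x = (i,j) \<Longrightarrow> i < 2*k \<Longrightarrow> j < 2*k \<Longrightarrow> P) \<Longrightarrow> P"
  by (cases x) (auto simp: cells_def)

lemma fix_id: "card {B. B \<subseteq> cells k \<and> actc k (False,False,False) ` B = B \<and> card B = r} = (4*k^2) choose r"
  using inst_nodiag[where u="(False,False,False)" and F="cells k" and L=1 and k=k and r=r]
  by (simp add: actc_e)

lemma fix_r90: "card {B. B \<subseteq> cells k \<and> actc k (True,False,True) ` B = B \<and> card B = r}
   = (if 4 dvd r then (k^2) choose (r div 4) else 0)"
proof -
  let ?s = "actc k (True,False,True)"
  let ?F = "{0..<k} \<times> {0..<k}"
  have "card {B. B \<subseteq> cells k \<and> ?s ` B = B \<and> card B = r} = (if 4 dvd r then (4*k^2 div 4) choose (r div 4) else 0)"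
  proof (rule inst_nodiag)
    show "?F \<subseteq> cells k" by (auto simp: cells_def)
    show "\<exists>n<4. (?s^^n) x \<in> ?F" if "x \<in> cells k" for x
      using that unfolding ex4 by (elim cellsE) (auto simp: fp2 fp3 actc_in Let_def)
    show "(?s^^n) y \<notin> ?F" if "y \<in> ?F" "0 < n" "n < 4" for y n
      using n4[OF that(2,3)] that(1) by (cases y) (auto simp: fp2 fp3 actc_in Let_def)
    show "(?s^^4) x = x" if "x \<in> cells k" for x
      using that by (elim cellsE) (auto simp: fp4 actc_in Let_def)
  qed simp
  then show ?thesis by simp
qed

lemma fix_r270: "card {B. B \<subseteq> cells k \<and> actc k (True,True,False) ` B = B \<and> card B = r}
   = (if 4 dvd r then (k^2) choose (r div 4) else 0)"
proof -
  let ?s = "actc k (True,True,False)"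
  let ?F = "{0..<k} \<times> {0..<k}"
  have "card {B. B \<subseteq> cells k \<and> ?s ` B = B \<and> card B = r} = (if 4 dvd r then (4*k^2 div 4) choose (r div 4) else 0)"
  proof (rule inst_nodiag)
    show "?F \<subseteq> cells k" by (auto simp: cells_def)
    show "\<exists>n<4. (?s^^n) x \<in> ?F" if "x \<in> cells k" for x
      using that unfolding ex4 by (elim cellsE) (auto simp: fp2 fp3 actc_in Let_def)
    show "(?s^^n) y \<notin> ?F" if "y \<in> ?F" "0 < n" "n < 4" for y n
      using n4[OF that(2,3)] that(1) by (cases y) (auto simp: fp2 fp3 actc_in Let_def)
    show "(?s^^4) x = x" if "x \<in> cells k" for x
      using that by (elim cellsE) (auto simp: fp4 actc_in Let_def)
  qed simp
  then show ?thesis by simp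
qed

lemma fix_half:
  assumes "u \<in> {(False,True,True), (False,True,False)}"
  shows "card {B. B \<subseteq> cells k \<and> actc k u ` B = B \<and> card B = r}
   = (if 2 dvd r then (2*k^2) choose (r div 2) else 0)"
proof -
  let ?s = "actc k u"
  let ?F = "{0..<k} \<times> {0..<2*k}"
  have "card {B. B \<subseteq> cells k \<and> ?s ` B = B \<and> card B = r} = (if 2 dvd r then (4*k^2 div 2) choose (r div 2) else 0)"
  proof (rule inst_nodiag)
    show "?F \<subseteq> cells k" by (auto simp: cells_def)
    show "\<exists>n<2. (?s^^n) x \<in> ?F" if "x \<in> cells k" for x
      using that assms unfolding ex2 by (elim cellsE) (auto simp: actc_in Let_def)
    show "(?s^^n) y \<notin> ?F" if "y \<in> ?F" "0 < n" "n < 2" for y n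
      using n2[OF that(2,3)] that(1) assms by (cases y) (auto simp: actc_in Let_def)
    show "(?s^^2) x = x" if "x \<in> cells k" for x
      using that assms by (elim cellsE) (auto simp: fp2 actc_in Let_def)
  qed simp
  then show ?thesis by simp
qed

lemma fix_vhalf:
  "card {B. B \<subseteq> cells k \<and> actc k (False,False,True) ` B = B \<and> card B = r}
   = (if 2 dvd r then (2*k^2) choose (r div 2) else 0)"
proof -
  let ?s = "actc k (False,False,True)"
  let ?F = "{0..<2*k} \<times> {0..<k}"
  have "card {B. B \<subseteq> cells k \<and> ?s ` B = B \<and> card B = r} = (if 2 dvd r then (4*k^2 div 2) choose (r div 2) else 0)"
  proof (rule inst_nodiag)
    show "?F \<subseteq> cells k" by (auto simp: cells_def)
    show "\<exists>n<2. (?s^^n) x \<in> ?F" if "x \<in> cells k" for x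
      using that unfolding ex2 by (elim cellsE) (auto simp: actc_in Let_def)
    show "(?s^^n) y \<notin> ?F" if "y \<in> ?F" "0 < n" "n < 2" for y n
      using n2[OF that(2,3)] that(1) by (cases y) (auto simp: actc_in Let_def)
    show "(?s^^2) x = x" if "x \<in> cells k" for x
      using that by (elim cellsE) (auto simp: fp2 actc_in Let_def)
  qed simp
  then show ?thesis by simp
qed



lemma fix_diag:
  "card {B. B \<subseteq> cells k \<and> actc k (True,False,False) ` B = B \<and> card B = r}
   = (\<Sum>t=0..r. (2*k choose t) * (if 2 dvd (r-t) then (k*(2*k-1)) choose ((r-t) div 2) else 0))"
proof (rule inst_diag[where D="{(i,j). i < 2*k \<and> j = i}" and F="{(i,j). i < j \<and> j < 2*k}"])
  have "{(i,j). i < 2*k \<and> j = i} = (\<lambda>i. (i,i)) ` {0..<2*k}" by auto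
  then show "card {(i,j). i < 2*k \<and> j = i} = 2*k" by (simp add: card_image inj_on_def)
  show "x \<in> cells k \<Longrightarrow> x \<notin> {(i,j). i < 2*k \<and> j = i} \<Longrightarrow>
    \<exists>n<2. (actc k (True,False,False) ^^ n) x \<in> {(i,j). i < j \<and> j < 2*k}" for x
    unfolding ex2 by (elim cellsE) (auto simp: actc_in Let_def)
  show "y \<in> {(i,j). i < j \<and> j < 2*k} \<Longrightarrow> actc k (True,False,False) y \<notin> {(i,j). i < j \<and> j < 2*k}" for y
    by (cases y) (auto simp: actc_in Let_def)
  show "x \<in> cells k \<Longrightarrow> (actc k (True,False,False) ^^ 2) x = x" for x
    by (elim cellsE) (auto simp: fp2 actc_in Let_def)
  show "x \<in> {(i,j). i < 2*k \<and> j = i} \<Longrightarrow> actc k (True,False,False) x = x" for x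
    by (cases x) (auto simp: actc_in Let_def)
qed (auto simp: cells_def)

lemma fix_adiag:
  "card {B. B \<subseteq> cells k \<and> actc k (True,True,True) ` B = B \<and> card B = r}
   = (\<Sum>t=0..r. (2*k choose t) * (if 2 dvd (r-t) then (k*(2*k-1)) choose ((r-t) div 2) else 0))"
proof (rule inst_diag[where D="{(i,j). i < 2*k \<and> j = 2*k-1-i}" and F="{(i,j). i + j < 2*k-1}"])
  have "{(i,j). i < 2*k \<and> j = 2*k-1-i} = (\<lambda>i. (i,2*k-1-i)) ` {0..<2*k}" by auto
  then show "card {(i,j). i < 2*k \<and> j = 2*k-1-i} = 2*k" by (simp add: card_image inj_on_def)
  show "x \<in> cells k \<Longrightarrow> x \<notin> {(i,j). i < 2*k \<and> j = 2*k-1-i} \<Longrightarrow>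
    \<exists>n<2. (actc k (True,True,True) ^^ n) x \<in> {(i,j). i + j < 2*k-1}" for x
    unfolding ex2 by (elim cellsE) (auto simp: actc_in Let_def)
  show "y \<in> {(i,j). i + j < 2*k-1} \<Longrightarrow> actc k (True,True,True) y \<notin> {(i,j). i + j < 2*k-1}" for y
    by (cases y) (auto simp: actc_in Let_def)
  show "x \<in> cells k \<Longrightarrow> (actc k (True,True,True) ^^ 2) x = x" for x
    by (elim cellsE) (auto simp: fp2 actc_in Let_def)
  show "x \<in> {(i,j). i < 2*k \<and> j = 2*k-1-i} \<Longrightarrow> actc k (True,True,True) x = x" for x
    by (cases x) (auto simp: actc_in Let_def)
qed (auto simp: cells_def)



lemma orbit_eq: "B \<subseteq> cells k \<Longrightarrow> orbit k B = range (\<lambda>u. actc k u ` B)"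
proof -
  assume B: "B \<subseteq> cells k"
  have "actc k u ` B = base k u ` B" for u
    by (rule image_cong) (use B in \<open>auto simp: actc_def\<close>)
  then show ?thesis unfolding orbit_def range_base[symmetric] by auto
qed

lemma gbin_div:
  assumes L: "0 < L"
  shows "gbin a (real n / real L) = (if L dvd n then real (a choose (n div L)) else 0)"
proof (cases "L dvd n")
  case True
  then obtain q where n: "n = L * q" by auto
  have "real n / real L = real q" using L n by simp
  then show ?thesis using True n L by (simp add: gbin_def)
next
  case False
  have "real n / real L \<notin> \<int>"
  proof
    assume "real n / real L \<in> \<int>"
    then obtain z where z: "real n / real L = of_int z" by (auto elim: Ints_cases)
    then have "real n = real L * of_int z" using L by (simp add: field_simps)
    then have "int n = int L * z" by (metis of_int_eq_iff of_int_mult of_int_of_nat_eq)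
    then have "int L dvd int n" by simp
    then show False using False by simp
  qed
  then show ?thesis using False by (simp add: gbin_def)
qed

lemma fixset: "{B \<in> boards k r. actc k u ` B = B} = {B. B \<subseteq> cells k \<and> actc k u ` B = B \<and> card B = r}"
  by (auto simp: boards_def)

theorem proposition5p1:
  fixes k r :: nat
  assumes "k \<ge> 1" and "1 \<le> r" and "r \<le> 4*k^2"
  shows "real (card (orbits k r)) =
    (1/8) * ( real (4*k^2 choose r)
            + 2 * gbin (k^2) (real r / 4)
            + 3 * gbin (2*k^2) (real r / 2)
            + 2 * (\<Sum>t=0..r. real (2*k choose t) * gbin (k*(2*k-1)) ((real r - real t) / 2)))"
proof -
  have orbs: "orbits k r = (\<lambda>B. range (\<lambda>u. actc k u ` B)) ` boards k r"
    unfolding orbits_def by (rule image_cong) (auto simp: boards_def orbit_eq)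
  have finB: "finite (boards k r)"
    by (rule finite_subset[of _ "Pow (cells k)"]) (auto simp: boards_def fin_cells)
  have actB: "actc k u ` B \<in> boards k r" if "B \<in> boards k r" for u B
  proof -
    have inj: "inj_on (actc k u) B"
    proof (rule inj_on_inverseI)
      fix x show "actc k (ginv u) (actc k u x) = x"
        by (simp flip: actc_mul add: gmul_inv actc_e)
    qed
    have "actc k u ` B \<subseteq> cells k" using that actc_cells[of _ k u] unfolding boards_def by blast
    then show ?thesis using that inj by (auto simp: boards_def card_image)
  qed
  have B: "card ((\<lambda>B. range (\<lambda>u. actc k u ` B)) ` boards k r) * card (UNIV::g8 set)
     = (\<Sum>u\<in>UNIV. card {B \<in> boards k r. actc k u ` B = B})"
    by (rule burnside[where mul=gmul and inv=ginv and e="(False,False,False)"])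
       (auto simp: finB actB actc_mul image_image actc_e gmul_inv gc1 gc2)
  have U: "(UNIV::g8 set) = {(False,False,False),(True,False,True),(True,True,False),
     (False,True,True),(False,True,False),(False,False,True),(True,False,False),(True,True,True)}"
    by auto
  define S where "S = (\<Sum>t=0..r. (2*k choose t) * (if 2 dvd (r-t) then (k*(2*k-1)) choose ((r-t) div 2) else 0))"
  have c8: "card (UNIV::g8 set) = 8" unfolding U by simp
  have sumU: "(\<Sum>u\<in>(UNIV::g8 set). card {B \<in> boards k r. actc k u ` B = B}) = (4*k^2 choose r) + 2 * (if 4 dvd r then (k^2) choose (r div 4) else 0)
      + 3 * (if 2 dvd r then (2*k^2) choose (r div 2) else 0) + 2 * S"
    unfolding fixset U
    by (simp add: fix_id fix_r90 fix_r270 fix_half fix_vhalf fix_diag fix_adiag S_def)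
  have "card (orbits k r) * 8 = (4*k^2 choose r) + 2 * (if 4 dvd r then (k^2) choose (r div 4) else 0)
      + 3 * (if 2 dvd r then (2*k^2) choose (r div 2) else 0) + 2 * S"
    using B unfolding orbs[symmetric] c8 sumU .
  then have "real (card (orbits k r) * 8) = real ((4*k^2 choose r) + 2 * (if 4 dvd r then (k^2) choose (r div 4) else 0)
      + 3 * (if 2 dvd r then (2*k^2) choose (r div 2) else 0) + 2 * S)" by (simp only:)
  then have R: "real (card (orbits k r)) * 8 = real (4*k^2 choose r) + 2 * real (if 4 dvd r then (k^2) choose (r div 4) else 0)
      + 3 * real (if 2 dvd r then (2*k^2) choose (r div 2) else 0) + 2 * real S"
    by (simp only: of_nat_add of_nat_mult of_nat_numeral)
  have g4: "gbin (k^2) (real r / 4) = real (if 4 dvd r then (k^2) choose (r div 4) else 0)"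
    using gbin_div[of 4 "k^2" r] by simp
  have g2: "gbin (2*k^2) (real r / 2) = real (if 2 dvd r then (2*k^2) choose (r div 2) else 0)"
    using gbin_div[of 2 "2*k^2" r] by simp
  have gS: "(\<Sum>t=0..r. real (2*k choose t) * gbin (k*(2*k-1)) ((real r - real t) / 2)) = real S"
    unfolding S_def of_nat_sum
  proof (rule sum.cong[OF refl])
    fix t assume "t \<in> {0..r}"
    then have "(real r - real t) / 2 = real (r - t) / real (2::nat)" by simp
    then have e: "gbin (k*(2*k-1)) ((real r - real t) / 2) = (if 2 dvd (r-t) then real ((k*(2*k-1)) choose ((r-t) div 2)) else 0)"
      using gbin_div[of 2 "k*(2*k-1)" "r-t"] by (simp only:)
    show "real (2*k choose t) * gbin (k*(2*k-1)) ((real r - real t) / 2) =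
      real ((2*k choose t) * (if 2 dvd (r-t) then (k*(2*k-1)) choose ((r-t) div 2) else 0))"
      unfolding e by (cases "2 dvd (r-t)") (simp_all only: if_True if_False of_nat_mult of_nat_0 mult_zero_right)
  qed
  have d8: "(c::real) * 8 = X \<Longrightarrow> c = 1/8 * X" for c X by simp
  show ?thesis unfolding g4 g2 gS using R by (rule d8)
qed

end
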